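(* Let $(P_1,\dots,P_J)$ be a stochastically rationalizable stochastic demand system assigning probability zero to patches that lie on more than one budget plane, and let $\pi=(\pi_{-J}',\pi_J')'$ be its vector representation. For $k\in\{1,\dots,G\}$ let $\delta_k(J)=\int y_k\,dP_J(y)$ be expected demand for good $k$ on $\mathcal{B}_J$. Then $$\underline\delta_k(J)\le\delta_k(J)\le\overline\delta_k(J),$$ where $\underline\delta_k(J)=\min\{\underline d_k(J)A_J\nu:\ A_{-J}\nu=\pi_{-J},\ \nu\ge0\}$ and $\overline\delta_k(J)=\max\{\overline d_k(J)A_J\nu:\ A_{-J}\nu=\pi_{-J},\ \nu\ge0\}$.
   Context: Budget planes $\mathcal B_j=\{y\in\mathbf R^G_+:p_j'y=1\}$, $p_j\in\mathbf R^G_{++}$. Patches are cells of the coarsest partition of $\bigcup_j\mathcal B_j$ such that each cell is, for every $j$, entirely on, strictly above or strictly below $\mathcal B_j$; patches on more than one budget plane are dropped, $x_{1|j},\dots,x_{I_j|j}$ are the remaining patches in $\mathcal B_j$, $I=\sum_jI_j$, with fixed representatives $y^*_{i|j}\in x_{i|j}$. A demand vector $(d_1,\dots,d_J)\in\prod_j\mathcal B_j$ is rationalizable if some strictly increasing $u:\mathbf R^G_+\to\mathbf R$ has $d_j\in\arg\max_{\mathcal B_j}u$ for all $j$. A stochastic demand system $(P_1,\dots,P_J)$ ($P_j$ a probability on $\mathcal B_j$) is stochastically rationalizable if some probability on $\prod_j\mathcal B_j$ concentrated on rationalizable demand vectors has marginals $P_1,\dots,P_J$. Its vector representation $\pi\in\mathbf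 R^I$ has $j$-th block $(P_j(x_{1|j}),\dots,P_j(x_{I_j|j}))$. $A\in\{0,1\}^{I\times H}$ has as columns (each once) exactly the binary $I$-vectors with one $1$ per block, at position $i_j$ in block $j$, such that $(y^*_{i_1|1},\dots,y^*_{i_J|J})$ is rationalizable. $A_J,\pi_J$ denote the rows/entries of block $J$ and $A_{-J},\pi_{-J}$ the rest. $\underline d_k(J)=(\underline d_k(1|J),\dots,\underline d_k(I_J|J))$ and $\overline d_k(J)=(\overline d_k(1|J),\dots,\overline d_k(I_J|J))$ are row vectors with $\underline d_k(i|J)=\inf\{y_k:y\in x_{i|J}\}$ and $\overline d_k(i|J)=\sup\{y_k:y\in x_{i|J}\}$. *)

theory Defs
  imports "HOL-Analysis.Analysis" "HOL-Probability.Probability"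
begin

text \<open>Goods are indexed by a finite type 'g (so R^G is real^'g), budgets by a finite type 'j.\<close>

definition orthant :: "(real^'g) set" where
  "orthant = {y. \<forall>i. 0 \<le> y$i}"

definition budget :: "('j \<Rightarrow> real^'g) \<Rightarrow> 'j \<Rightarrow> (real^'g) set" where
  "budget p j = {y \<in> orthant. p j \<bullet> y = 1}"

definition union_budgets :: "('j \<Rightarrow> real^'g) \<Rightarrow> (real^'g) set" where
  "union_budgets p = (\<Union>j. budget p j)"

text \<open>The patch containing y: points of the union of budget planes having the same
  position (on / strictly above / strictly below) as y relative to every budget plane.
  These are the cells of the coarsest such partition.\<close>
definition patch_of :: "('j \<Rightarrow> real^'g) \<Rightarrow> real^'g \<Rightarrow> (real^'g) set" where
  "patch_of p y = {z \<in> union_budgets p. \<forall>j. sgn (p j \<bullet> z - 1) = sgn (p j \<bullet> y - 1)}"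

definition patches :: "('j \<Rightarrow> real^'g) \<Rightarrow> (real^'g) set set" where
  "patches p = patch_of p ` union_budgets p"

definition multi_patches :: "('j \<Rightarrow> real^'g) \<Rightarrow> (real^'g) set set" where
  "multi_patches p = {x \<in> patches p. \<exists>j k. j \<noteq> k \<and> x \<subseteq> budget p j \<and> x \<subseteq> budget p k}"

definition patches_in :: "('j \<Rightarrow> real^'g) \<Rightarrow> 'j \<Rightarrow> (real^'g) set set" where
  "patches_in p j = {x \<in> patches p. x \<subseteq> budget p j \<and> (\<forall>k. k \<noteq> j \<longrightarrow> \<not> x \<subseteq> budget p k)}"

definition strictly_increasing :: "(real^'g \<Rightarrow> real) \<Rightarrow> bool" where
  "strictly_increasing u \<longleftrightarrow>
     (\<forall>y y'. y \<in> orthant \<and> y' \<in> orthant \<and> (\<forall>i. y'$i \<le> y$i) \<and> y' \<noteq> y \<longrightarrow> u y' < u y)"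

definition rationalizable :: "('j \<Rightarrow> real^'g) \<Rightarrow> ('j \<Rightarrow> real^'g) \<Rightarrow> bool" where
  "rationalizable p d \<longleftrightarrow> (\<forall>j. d j \<in> budget p j) \<and>
     (\<exists>u. strictly_increasing u \<and> (\<forall>j. \<forall>y\<in>budget p j. u y \<le> u (d j)))"

definition stoch_demand_system :: "('j \<Rightarrow> real^'g) \<Rightarrow> ('j \<Rightarrow> (real^'g) measure) \<Rightarrow> bool" where
  "stoch_demand_system p P \<longleftrightarrow>
     (\<forall>j. prob_space (P j) \<and> sets (P j) = sets borel \<and> emeasure (P j) (budget p j) = 1)"

definition stoch_rationalizable :: "('j::finite \<Rightarrow> real^'g) \<Rightarrow> ('j \<Rightarrow> (real^'g) measure) \<Rightarrow> bool" where
  "stoch_rationalizable p P \<longleftrightarrow>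
     (\<exists>Q. prob_space Q \<and> sets Q = sets (Pi\<^sub>M UNIV (\<lambda>_. borel)) \<and>
          (AE d in Q. rationalizable p d) \<and>
          (\<forall>j. distr Q borel (\<lambda>d. d j) = P j))"

text \<open>Columns of the matrix A: one remaining patch per budget such that the vector of
  representatives is rationalizable.  A column c is encoded as the choice function j \<mapsto> c j.\<close>
definition columns :: "('j \<Rightarrow> real^'g) \<Rightarrow> ((real^'g) set \<Rightarrow> real^'g) \<Rightarrow> ('j \<Rightarrow> (real^'g) set) set" where
  "columns p rep = {c. (\<forall>j. c j \<in> patches_in p j) \<and> rationalizable p (\<lambda>j. rep (c j))}"

definition Amul :: "('j \<Rightarrow> real^'g) \<Rightarrow> ((real^'g) set \<Rightarrow> real^'g) \<Rightarrow> (('j \<Rightarrow> (real^'g) set) \<Rightarrow> real)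
                     \<Rightarrow> 'j \<Rightarrow> (real^'g) set \<Rightarrow> real" where
  "Amul p rep \<nu> j x = (\<Sum>c\<in>{c \<in> columns p rep. c j = x}. \<nu> c)"

definition feasible :: "('j \<Rightarrow> real^'g) \<Rightarrow> ((real^'g) set \<Rightarrow> real^'g) \<Rightarrow> ('j \<Rightarrow> (real^'g) measure) \<Rightarrow> 'j
                         \<Rightarrow> (('j \<Rightarrow> (real^'g) set) \<Rightarrow> real) set" where
  "feasible p rep P jJ = {\<nu>. (\<forall>c. 0 \<le> \<nu> c) \<and>
      (\<forall>j x. j \<noteq> jJ \<and> x \<in> patches_in p j \<longrightarrow> Amul p rep \<nu> j x = measure (P j) x)}"

definition d_low :: "'g \<Rightarrow> (real^'g) set \<Rightarrow> real" where
  "d_low k x = Inf ((\<lambda>y. y$k) ` x)"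

definition d_up :: "'g \<Rightarrow> (real^'g) set \<Rightarrow> real" where
  "d_up k x = Sup ((\<lambda>y. y$k) ` x)"

definition obj :: "('j \<Rightarrow> real^'g) \<Rightarrow> ((real^'g) set \<Rightarrow> real^'g) \<Rightarrow> 'j \<Rightarrow> ((real^'g) set \<Rightarrow> real)
                    \<Rightarrow> (('j \<Rightarrow> (real^'g) set) \<Rightarrow> real) \<Rightarrow> real" where
  "obj p rep jJ d \<nu> = (\<Sum>x\<in>patches_in p jJ. d x * Amul p rep \<nu> jJ x)"

text \<open>The LP min / max, taken as Inf / Sup in the extended reals.\<close>
definition delta_low :: "('j \<Rightarrow> real^'g) \<Rightarrow> ((real^'g) set \<Rightarrow> real^'g) \<Rightarrow> ('j \<Rightarrow> (real^'g) measure) \<Rightarrow> 'j \<Rightarrow> 'g \<Rightarrow> ereal" where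
  "delta_low p rep P jJ k = Inf ((\<lambda>\<nu>. ereal (obj p rep jJ (d_low k) \<nu>)) ` feasible p rep P jJ)"

definition delta_up :: "('j \<Rightarrow> real^'g) \<Rightarrow> ((real^'g) set \<Rightarrow> real^'g) \<Rightarrow> ('j \<Rightarrow> (real^'g) measure) \<Rightarrow> 'j \<Rightarrow> 'g \<Rightarrow> ereal" where
  "delta_up p rep P jJ k = Sup ((\<lambda>\<nu>. ereal (obj p rep jJ (d_up k) \<nu>)) ` feasible p rep P jJ)"

end

theory Submission
  imports Defs
begin


lemma sv_patch_eq:
  assumes "z \<in> patch_of p y"
  shows "patch_of p z = patch_of p y"
  using assms unfolding patch_of_def by auto

lemma mem_patch_iff:
  assumes "x \<in> patches p" "y \<in> union_budgets p"
  shows "y \<in> x \<longleftrightarrow> x = patch_of p y"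
proof -
  obtain w where w: "w \<in> union_budgets p" "x = patch_of p w" using assms unfolding patches_def by auto
  have "y \<in> patch_of p y" using assms(2) unfolding patch_of_def by auto
  then show ?thesis using w sv_patch_eq by metis
qed

lemma patches_disjoint:
  assumes "x \<in> patches p" "x' \<in> patches p" "x \<noteq> x'"
  shows "x \<inter> x' = {}"
proof -
  have "x \<subseteq> union_budgets p" using assms unfolding patches_def patch_of_def by auto
  then show ?thesis using mem_patch_iff[OF assms(1)] mem_patch_iff[OF assms(2)] assms(3) by blast
qed

lemma finite_patches: "finite (patches (p :: 'j::finite \<Rightarrow> real^'g))"
proof -
  define F where "F s = {z \<in> union_budgets p. \<forall>j. sgn (p j \<bullet> z - 1) = s j}" for s :: "'j \<Rightarrow> real"
  have "patches p \<subseteq> F ` {s. \<forall>j. (j \<in> UNIV \<longrightarrow> s j \<in> {-1,0,1}) \<and> (j \<notin> UNIV \<longrightarrow> s j = 0)}"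
  proof
    fix x assume "x \<in> patches p"
    then obtain y where "x = patch_of p y" unfolding patches_def by auto
    then have "x = F (\<lambda>j. sgn (p j \<bullet> y - 1))" unfolding F_def patch_of_def by auto
    moreover have "(\<lambda>j. sgn (p j \<bullet> y - 1)) \<in> {s. \<forall>j. (j \<in> UNIV \<longrightarrow> s j \<in> {-1,0,1}) \<and> (j \<notin> UNIV \<longrightarrow> s j = 0)}"
      by (auto simp: sgn_real_def)
    ultimately show "x \<in> F ` {s. \<forall>j. (j \<in> UNIV \<longrightarrow> s j \<in> {-1,0,1}) \<and> (j \<notin> UNIV \<longrightarrow> s j = 0)}" by blast
  qed
  moreover have "finite {s::'j\<Rightarrow>real. \<forall>j. (j \<in> UNIV \<longrightarrow> s j \<in> {-1,0,1}) \<and> (j \<notin> UNIV \<longrightarrow> s j = 0)}"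
    by (rule finite_set_of_finite_funs) auto
  ultimately show ?thesis by (meson finite_surj)
qed

lemma finite_columns: "finite (columns (p :: 'j::finite \<Rightarrow> real^'g) rep)"
proof -
  have "columns p rep \<subseteq> {c. \<forall>j. (j \<in> UNIV \<longrightarrow> c j \<in> patches p) \<and> (j \<notin> UNIV \<longrightarrow> c j = {})}"
    unfolding columns_def patches_in_def by auto
  moreover have "finite \<dots>" by (rule finite_set_of_finite_funs) (auto simp: finite_patches)
  ultimately show ?thesis by (rule finite_subset)
qed

lemma patch_borel: "patch_of (p :: 'j::finite \<Rightarrow> real^'g) y \<in> sets borel"
proof -
  have "patch_of p y = {z \<in> space borel. (\<exists>j. (\<forall>i. 0 \<le> z$i) \<and> p j \<bullet> z = 1) \<and> (\<forall>j. sgn (p j \<bullet> z - 1) = sgn (p j \<bullet> y - 1))}"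
    unfolding patch_of_def union_budgets_def budget_def orthant_def by auto
  also have "\<dots> \<in> sets borel"
  proof -
    have [measurable]: "Measurable.pred borel (\<lambda>z::real^'g. 0 \<le> z$i)" for i by measurable
    have [measurable]: "Measurable.pred borel (\<lambda>z::real^'g. p j \<bullet> z = 1)" for j by measurable
    have [measurable]: "Measurable.pred borel (\<lambda>z::real^'g. sgn (p j \<bullet> z - 1) = sgn (p j \<bullet> y - 1))" for j by measurable
    show ?thesis by measurable
  qed
  finally show ?thesis .
qed

lemma patches_borel: "x \<in> patches (p :: 'j::finite \<Rightarrow> real^'g) \<Longrightarrow> x \<in> sets borel"
  unfolding patches_def using patch_borel by auto



lemma inner_pos_strict:
  fixes q y y' :: "real^'g"
  assumes "\<forall>i. 0 < q$i" "\<forall>i. y'$i \<le> y$i" "y' \<noteq> y"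
  shows "q \<bullet> y' < q \<bullet> y"
proof -
  obtain k where k: "y'$k \<noteq> y$k" using assms(3) by (auto simp: vec_eq_iff)
  have "(\<Sum>i\<in>UNIV. q$i * y'$i) < (\<Sum>i\<in>UNIV. q$i * y$i)"
  proof (rule sum_strict_mono_ex1)
    show "\<forall>i\<in>UNIV. q$i * y'$i \<le> q$i * y$i" using assms by (simp add: less_imp_le mult_left_mono)
    show "\<exists>i\<in>UNIV. q$i * y'$i < q$i * y$i" using assms k
      by (metis UNIV_I mult_strict_left_mono order_le_imp_less_or_eq)
  qed simp
  then show ?thesis by (simp add: inner_vec_def)
qed

lemma inner_nonneg_orth:
  fixes q y :: "real^'g"
  assumes "\<forall>i. 0 < q$i" "y \<in> orthant"
  shows "0 \<le> q \<bullet> y"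
  using assms unfolding orthant_def inner_vec_def
  by (auto intro!: sum_nonneg simp: less_imp_le)

lemma exists_above:
  fixes q y :: "real^'g"
  assumes "\<forall>i. 0 < q$i" "y \<in> orthant" "q \<bullet> y < 1"
  shows "\<exists>z\<in>orthant. q \<bullet> z = 1 \<and> (\<forall>i. y$i \<le> z$i) \<and> y \<noteq> z"
proof -
  fix k :: 'g
  define t where "t = (1 - q \<bullet> y) / q$k"
  have t: "0 < t" using assms by (simp add: t_def)
  define z where "z = y + axis k t"
  have "q \<bullet> z = q \<bullet> y + q$k * t" by (simp add: z_def inner_add_right inner_axis)
  also have "\<dots> = 1"
  proof -
    have "q$k > 0" using assms(1) by simp
    then show ?thesis by (simp add: t_def)
  qed
  finally have 1: "q \<bullet> z = 1" .
  have 2: "\<forall>i. y$i \<le> z$i" using t by (simp add: z_def axis_def)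
  have 3: "y \<noteq> z" using t by (auto simp: z_def vec_eq_iff axis_def)
  have "z \<in> orthant" using 2 assms(2) unfolding orthant_def by (auto intro: order_trans)
  with 1 2 3 show ?thesis by blast
qed

lemma rat_invariant:
  fixes p :: "'j::finite \<Rightarrow> real^'g"
  assumes pos: "\<forall>j i. 0 < p j $ i"
    and rat: "rationalizable p d"
    and sg: "\<forall>j. d' j \<in> patch_of p (d j)"
  shows "rationalizable p d'"
proof -
  obtain u where u: "strictly_increasing u" "\<And>j y. y \<in> budget p j \<Longrightarrow> u y \<le> u (d j)"
    using rat unfolding rationalizable_def by blast
  have dB: "d j \<in> budget p j" for j using rat unfolding rationalizable_def by blast
  have d'o: "d' j \<in> orthant" for j using sg unfolding patch_of_def union_budgets_def budget_def by auto
  have sgn_eq: "sgn (p i \<bullet> d' j - 1) = sgn (p i \<bullet> d j - 1)" for i j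
    using sg unfolding patch_of_def by auto
  have eq1: "p i \<bullet> d' j = 1 \<longleftrightarrow> p i \<bullet> d j = 1" for i j
    using sgn_eq[of i j] by (auto simp: sgn_real_def split: if_splits)
  have lt1: "p i \<bullet> d' j < 1 \<longleftrightarrow> p i \<bullet> d j < 1" for i j
    using sgn_eq[of i j] by (auto simp: sgn_real_def split: if_splits)
  have d'B: "d' j \<in> budget p j" for j
    using eq1[of j j] dB[of j] d'o[of j] unfolding budget_def by auto
  define r where "r j = u (d j)" for j
  have rlt: "r j < r i" if "p i \<bullet> d j < 1" for i j
  proof -
    have "d j \<in> orthant" using dB unfolding budget_def by auto
    moreover have "\<forall>k. 0 < p i $ k" using pos by simp
    ultimately have "\<exists>z\<in>orthant. p i \<bullet> z = 1 \<and> (\<forall>k. d j $ k \<le> z $ k) \<and> d j \<noteq> z"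
      using exists_above[of "p i" "d j"] that by blast
    then obtain z where z: "z \<in> orthant" "p i \<bullet> z = 1" "\<forall>k. d j $ k \<le> z $ k" "d j \<noteq> z"
      by blast
    have "u (d j) < u z" using u(1) z \<open>d j \<in> orthant\<close> unfolding strictly_increasing_def by blast
    also have "\<dots> \<le> u (d i)" using u(2)[of z i] z unfolding budget_def by auto
    finally show ?thesis by (simp add: r_def)
  qed
  have rle: "r j \<le> r i" if "p i \<bullet> d j = 1" for i j
    using u(2)[of "d j" i] dB[of j] that unfolding budget_def r_def by auto
  define S where "S = (\<lambda>(i,j). r i - r j) ` {(i,j). r j < r i}"
  define \<epsilon> where "\<epsilon> = Min (insert 1 S)"
  have finS: "finite S" unfolding S_def by auto
  have eps_pos: "0 < \<epsilon>" unfolding \<epsilon>_def using finS by (auto simp: S_def)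
  have eps_le: "\<epsilon> \<le> r i - r j" if "r j < r i" for i j
    unfolding \<epsilon>_def using finS that by (intro Min_le) (auto simp: S_def)
  define K where "K = Max (range r) - Min (range r)"
  have K: "r j - r i \<le> K" for i j
  proof -
    have "r j \<le> Max (range r)" by (rule Max_ge) auto
    moreover have "Min (range r) \<le> r i" by (rule Min_le) auto
    ultimately show ?thesis unfolding K_def by linarith
  qed
  have K0: "0 \<le> K" using K[of undefined undefined] by simp
  define h where "h t = \<epsilon> * t + (if 0 < t then K else 0)" for t :: real
  have hmono: "h s < h t" if "s < t" for s t
    using that eps_pos K0 unfolding h_def by (auto simp: mult_strict_left_mono add_strict_increasing2 add_less_le_mono)
  define u' where "u' y = Min (range (\<lambda>i. r i + h (p i \<bullet> y - 1)))" for y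
  have u'_le: "u' y \<le> r i + h (p i \<bullet> y - 1)" for y i
    unfolding u'_def by (rule Min_le) auto
  have u'_strict: "strictly_increasing u'"
    unfolding strictly_increasing_def
  proof (intro allI impI)
    fix y y' :: "real^'g" assume a: "y \<in> orthant \<and> y' \<in> orthant \<and> (\<forall>i. y'$i \<le> y$i) \<and> y' \<noteq> y"
    have "Min (range (\<lambda>i. r i + h (p i \<bullet> y - 1))) \<in> range (\<lambda>i. r i + h (p i \<bullet> y - 1))"
      by (rule Min_in) auto
    then obtain i where i: "u' y = r i + h (p i \<bullet> y - 1)"
      unfolding u'_def by blast
    have "p i \<bullet> y' < p i \<bullet> y" using inner_pos_strict[of "p i" y' y] pos a by auto
    then have "h (p i \<bullet> y' - 1) < h (p i \<bullet> y - 1)" by (intro hmono) simp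
    then show "u' y' < u' y" using u'_le[of y' i] i by simp
  qed
  have key: "r j \<le> r i + h (p i \<bullet> d' j - 1)" for i j
  proof (cases "p i \<bullet> d' j - 1" "0::real" rule: linorder_cases)
    case less
    then have "p i \<bullet> d j < 1" using lt1 by simp
    then have "r j < r i" by (rule rlt)
    then have e: "\<epsilon> \<le> r i - r j" by (rule eps_le)
    have "0 \<le> p i \<bullet> d' j" using inner_nonneg_orth[of "p i" "d' j"] pos d'o by auto
    then have "- 1 \<le> p i \<bullet> d' j - 1" by simp
    then have "-\<epsilon> \<le> \<epsilon> * (p i \<bullet> d' j - 1)" using eps_pos
      by (metis mult.right_neutral mult_left_mono less_imp_le mult_minus_right)
    then show ?thesis using less e unfolding h_def by simp
  next
    case equal
    then show ?thesis using rle[of i j] eq1[of i j] unfolding h_def by simp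
  next
    case greater
    then show ?thesis using K[of j i] eps_pos unfolding h_def
      by (smt (verit, best) mult_pos_pos)
  qed
  have u'd: "r j \<le> u' (d' j)" for j
    unfolding u'_def using key by (intro Min.boundedI) auto
  have "u' y \<le> u' (d' j)" if "y \<in> budget p j" for y j
    using u'_le[of y j] that u'd[of j] unfolding budget_def h_def by simp
  then show ?thesis unfolding rationalizable_def using d'B u'_strict by blast
qed



lemma patch_in_budget:
  assumes "y \<in> budget p j"
  shows "patch_of p y \<subseteq> budget p j"
proof
  fix z assume z: "z \<in> patch_of p y"
  then have zo: "z \<in> orthant" unfolding patch_of_def union_budgets_def budget_def by auto
  have "sgn (p j \<bullet> z - 1) = sgn (p j \<bullet> y - 1)" using z unfolding patch_of_def by auto
  also have "\<dots> = 0" using assms unfolding budget_def by simp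
  finally have "p j \<bullet> z = 1" by (simp add: sgn_eq_0_iff)
  then show "z \<in> budget p j" using zo unfolding budget_def by simp
qed

lemma good_patch:
  fixes p :: "'j::finite \<Rightarrow> real^'g"
  assumes "y \<in> budget p j" "\<forall>x\<in>multi_patches p. y \<notin> x"
  shows "patch_of p y \<in> patches_in p j"
proof -
  have yU: "y \<in> union_budgets p" using assms unfolding union_budgets_def by auto
  have P: "patch_of p y \<in> patches p" using yU unfolding patches_def by auto
  have yin: "y \<in> patch_of p y" using yU unfolding patch_of_def by auto
  have sub: "patch_of p y \<subseteq> budget p j" by (rule patch_in_budget[OF assms(1)])
  have "\<not> patch_of p y \<subseteq> budget p k" if "k \<noteq> j" for k
  proof
    assume "patch_of p y \<subseteq> budget p k"
    then have "patch_of p y \<in> multi_patches p" using P sub that unfolding multi_patches_def by blast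
    then show False using assms(2) yin by blast
  qed
  then show ?thesis using P sub unfolding patches_in_def by blast
qed

lemma budget_bound:
  fixes q z :: "real^'g"
  assumes "\<forall>i. 0 < q$i" "z \<in> orthant" "q \<bullet> z = 1"
  shows "0 \<le> z$k \<and> z$k \<le> 1 / q$k"
proof -
  have nn: "\<forall>i. 0 \<le> z$i" using assms(2) unfolding orthant_def by auto
  have "q$k * z$k \<le> (\<Sum>i\<in>UNIV. q$i * z$i)"
    by (rule member_le_sum) (use assms(1) nn in \<open>auto intro: mult_nonneg_nonneg less_imp_le\<close>)
  also have "\<dots> = 1" using assms(3) by (simp add: inner_vec_def)
  finally have "q$k * z$k \<le> 1" .
  then have "z$k \<le> 1 / q$k" using assms(1) by (simp add: field_simps mult.commute)
  then show ?thesis using nn by simp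
qed

lemma integral_bounds:
  fixes p :: "'j::finite \<Rightarrow> real^'g" and M :: "(real^'g) measure"
  assumes pos: "\<forall>j i. 0 < p j $ i"
    and M: "prob_space M" "sets M = sets borel" "emeasure M (budget p J) = 1"
    and null: "\<forall>x\<in>multi_patches p. measure M x = 0"
  shows "(\<Sum>x\<in>patches_in p J. d_low k x * measure M x) \<le> (\<integral>y. y$k \<partial>M)
       \<and> (\<integral>y. y$k \<partial>M) \<le> (\<Sum>x\<in>patches_in p J. d_up k x * measure M x)"
proof -
  interpret prob_space M by (rule M(1))
  have spM: "space M = UNIV" using sets_eq_imp_space_eq[OF M(2)] by simp
  have finPin: "finite (patches_in p J)"
    by (rule finite_subset[OF _ finite_patches[of p]]) (auto simp: patches_in_def)
  have finMP: "finite (multi_patches p)"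
    by (rule finite_subset[OF _ finite_patches[of p]]) (auto simp: multi_patches_def)
  have setsP: "x \<in> sets M" if "x \<in> patches p" for x
    using patches_borel[OF that] M(2) by simp
  have AE1: "AE y in M. y \<in> budget p J"
    by (rule AE_prob_1) (use M(3) in \<open>simp add: measure_def\<close>)
  have AE2: "AE y in M. \<forall>x\<in>multi_patches p. y \<notin> x"
  proof (rule AE_finite_allI[OF finMP])
    fix x assume x: "x \<in> multi_patches p"
    then have xs: "x \<in> sets M" using setsP unfolding multi_patches_def by auto
    have "emeasure M x = 0" using null x by (simp add: emeasure_eq_measure)
    then have "x \<in> null_sets M" using xs by auto
    then show "AE y in M. y \<notin> x" by (rule AE_not_in)
  qed
  define g where "g f y = (\<Sum>x\<in>patches_in p J. f x * indicator x y)" for f :: "(real^'g) set \<Rightarrow> real" and y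
  have setsP': "x \<in> sets M" if "x \<in> patches_in p J" for x
    using setsP that unfolding patches_in_def by auto
  have iint: "integrable M (\<lambda>y. f x * indicator x y :: real)" if "x \<in> patches_in p J" for f x
  proof (rule integrable_mult_right, rule integrable_real_indicator)
    show "x \<in> sets M" by (rule setsP'[OF that])
    show "emeasure M x < \<infinity>" by (simp add: emeasure_eq_measure)
  qed
  have gint: "integrable M (g f)" for f
    unfolding g_def by (rule Bochner_Integration.integrable_sum[where f="\<lambda>x y. f x * indicator x y"]) (rule iint)
  have gval: "integral\<^sup>L M (g f) = (\<Sum>x\<in>patches_in p J. f x * measure M x)" for f
  proof -
    have "integral\<^sup>L M (g f) = (\<Sum>x\<in>patches_in p J. integral\<^sup>L M (\<lambda>y. f x * indicator x y))"
      unfolding g_def by (rule Bochner_Integration.integral_sum[where f="\<lambda>x y. f x * indicator x y"]) (rule iint)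
    also have "\<dots> = (\<Sum>x\<in>patches_in p J. f x * measure M x)"
      by (intro sum.cong refl) (simp add: spM)
    finally show ?thesis .
  qed
  have gpt: "g f y = f (patch_of p y)" if "y \<in> budget p J" "\<forall>x\<in>multi_patches p. y \<notin> x" for f y
  proof -
    have pin: "patch_of p y \<in> patches_in p J" by (rule good_patch[OF that])
    have yU: "y \<in> union_budgets p" using that unfolding union_budgets_def by auto
    have "indicator x y = (if x = patch_of p y then 1 else (0::real))" if "x \<in> patches_in p J" for x
      using mem_patch_iff[of x p y] that yU unfolding patches_in_def by (auto simp: indicator_def)
    then have "g f y = (\<Sum>x\<in>patches_in p J. if x = patch_of p y then f x else 0)"
      unfolding g_def by (intro sum.cong) auto
    also have "\<dots> = f (patch_of p y)" using finPin pin by (simp add: sum.delta')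
    finally show ?thesis .
  qed
  have bnd: "\<forall>z\<in>patch_of p y. 0 \<le> z$k \<and> z$k \<le> 1 / p J $ k" if "y \<in> budget p J" for y
    using patch_in_budget[OF that] budget_bound[of "p J"] pos unfolding budget_def by blast
  have lowpt: "d_low k (patch_of p y) \<le> y$k" if "y \<in> budget p J" for y
  proof -
    have yin: "y \<in> patch_of p y" using that unfolding patch_of_def union_budgets_def by auto
    show ?thesis unfolding d_low_def
      by (rule cInf_lower) (use yin bnd[OF that] in \<open>auto simp: bdd_below_def\<close>)
  qed
  have uppt: "y$k \<le> d_up k (patch_of p y)" if "y \<in> budget p J" for y
  proof -
    have yin: "y \<in> patch_of p y" using that unfolding patch_of_def union_budgets_def by auto
    show ?thesis unfolding d_up_def
      by (rule cSup_upper) (use yin bnd[OF that] in \<open>auto simp: bdd_above_def\<close>)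
  qed
  have meas: "(\<lambda>y. y$k) \<in> borel_measurable M"
    unfolding measurable_cong_sets[OF M(2) refl] by simp
  have yint: "integrable M (\<lambda>y::real^'g. y$k)"
  proof (rule integrable_const_bound[where B="1 / p J $ k"])
    show "AE x in M. norm (x$k) \<le> 1 / p J $ k"
      using AE1 by eventually_elim (use budget_bound[of "p J"] pos in \<open>auto simp: budget_def\<close>)
  qed (rule meas)
  have "integral\<^sup>L M (g (d_low k)) \<le> (\<integral>y. y$k \<partial>M)"
    using gint yint by (rule integral_mono_AE) (use AE1 AE2 in \<open>eventually_elim, simp add: gpt lowpt\<close>)
  moreover have "(\<integral>y. y$k \<partial>M) \<le> integral\<^sup>L M (g (d_up k))"
    using yint gint by (rule integral_mono_AE) (use AE1 AE2 in \<open>eventually_elim, simp add: gpt uppt\<close>)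
  ultimately show ?thesis using gval by simp
qed



theorem corollary2:
  fixes p :: "'j::finite \<Rightarrow> real^'g"
    and P :: "'j \<Rightarrow> (real^'g) measure"
    and rep :: "(real^'g) set \<Rightarrow> real^'g"
    and jJ :: 'j
    and k :: 'g
  assumes "\<forall>j i. 0 < p j $ i"
    and "stoch_demand_system p P"
    and "stoch_rationalizable p P"
    and "\<forall>j. \<forall>x\<in>multi_patches p. measure (P j) x = 0"
    and "\<forall>x\<in>patches p. rep x \<in> x"
  shows "delta_low p rep P jJ k \<le> ereal (\<integral>y. y$k \<partial>(P jJ))
       \<and> ereal (\<integral>y. y$k \<partial>(P jJ)) \<le> delta_up p rep P jJ k"
proof -
  note pos = assms(1)
  have sds: "prob_space (P j)" "sets (P j) = sets borel" "emeasure (P j) (budget p j) = 1" for j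
    using assms(2) unfolding stoch_demand_system_def by auto
  obtain Q where Q: "prob_space Q" "sets Q = sets (Pi\<^sub>M UNIV (\<lambda>_. borel))"
      "AE d in Q. rationalizable p d" "\<forall>j. distr Q borel (\<lambda>d. d j) = P j"
    using assms(3) unfolding stoch_rationalizable_def by blast
  interpret Q: prob_space Q by (rule Q(1))
  have mj: "(\<lambda>d. d j) \<in> measurable Q borel" for j
    unfolding measurable_cong_sets[OF Q(2) refl] by (rule measurable_component_singleton) simp
  have Ssets: "{d \<in> space Q. d j \<in> x} \<in> sets Q" if "x \<in> sets borel" for j x
  proof -
    have "(\<lambda>d. d j) -` x \<inter> space Q \<in> sets Q" by (rule measurable_sets[OF mj that])
    moreover have "(\<lambda>d. d j) -` x \<inter> space Q = {d \<in> space Q. d j \<in> x}" by auto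
    ultimately show ?thesis by simp
  qed
  have PQ: "measure (P j) x = measure Q {d \<in> space Q. d j \<in> x}" if "x \<in> sets borel" for j x
  proof -
    have "measure (P j) x = measure (distr Q borel (\<lambda>d. d j)) x" using Q(4) by simp
    also have "\<dots> = measure Q ((\<lambda>d. d j) -` x \<inter> space Q)" by (rule measure_distr[OF mj that])
    also have "(\<lambda>d. d j) -` x \<inter> space Q = {d \<in> space Q. d j \<in> x}" by auto
    finally show ?thesis .
  qed
  have mp_borel: "x \<in> sets borel" if "x \<in> multi_patches p" for x
    using that patches_borel[of x p] unfolding multi_patches_def by auto
  have finMP: "finite (multi_patches p)"
    by (rule finite_subset[OF _ finite_patches[of p]]) (auto simp: multi_patches_def)
  have AEm: "AE d in Q. \<forall>j\<in>UNIV. \<forall>x\<in>multi_patches p. d j \<notin> x"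
  proof (rule AE_finite_allI, simp)
    fix j :: 'j
    show "AE d in Q. \<forall>x\<in>multi_patches p. d j \<notin> x"
    proof (rule AE_finite_allI[OF finMP])
      fix x assume x: "x \<in> multi_patches p"
      let ?N = "{d \<in> space Q. d j \<in> x}"
      have Ns: "?N \<in> sets Q" by (rule Ssets[OF mp_borel[OF x]])
      have "measure Q ?N = 0" using PQ[OF mp_borel[OF x], of j] assms(4) x by simp
      then have "emeasure Q ?N = 0" by (simp add: Q.emeasure_eq_measure)
      then have "?N \<in> null_sets Q" using Ns by auto
      then show "AE d in Q. d j \<notin> x" by (rule AE_I') auto
    qed
  qed
  have good: "AE d in Q. rationalizable p d \<and> (\<forall>j. \<forall>x\<in>multi_patches p. d j \<notin> x)"
    using Q(3) AEm by eventually_elim auto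
  have colmem: "(\<lambda>j. patch_of p (d j)) \<in> columns p rep"
    if "rationalizable p d" "\<forall>j. \<forall>x\<in>multi_patches p. d j \<notin> x" for d
  proof -
    have dB: "d j \<in> budget p j" for j using that(1) unfolding rationalizable_def by blast
    have pin: "patch_of p (d j) \<in> patches_in p j" for j by (rule good_patch[OF dB]) (use that(2) in auto)
    have "rationalizable p (\<lambda>j. rep (patch_of p (d j)))"
    proof (rule rat_invariant[OF pos that(1)])
      show "\<forall>j. rep (patch_of p (d j)) \<in> patch_of p (d j)"
        using pin assms(5) unfolding patches_in_def by blast
    qed
    then show ?thesis using pin unfolding columns_def by auto
  qed
  define E where "E c = {d \<in> space Q. \<forall>j. d j \<in> c j}" for c :: "'j \<Rightarrow> (real^'g) set"
  define \<nu> where "\<nu> c = (if c \<in> columns p rep then measure Q (E c) else 0)" for c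
  have cpat: "c j \<in> patches p" if "c \<in> columns p rep" for c j
    using that unfolding columns_def patches_in_def by auto
  have Esets: "E c \<in> sets Q" if "c \<in> columns p rep" for c
  proof -
    have "E c = (\<Inter>j\<in>UNIV. {d \<in> space Q. d j \<in> c j})" unfolding E_def by auto
    also have "\<dots> \<in> sets Q"
      by (rule sets.finite_INT) (auto intro: Ssets patches_borel cpat[OF that])
    finally show ?thesis .
  qed
  have Amul_eq: "Amul p rep \<nu> j x = measure (P j) x" if x: "x \<in> patches_in p j" for j x
  proof -
    define C where "C = {c \<in> columns p rep. c j = x}"
    have finC: "finite C" unfolding C_def using finite_columns[of p rep] by simp
    have xP: "x \<in> patches p" using x unfolding patches_in_def by auto
    have "Amul p rep \<nu> j x = (\<Sum>c\<in>C. measure Q (E c))"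
      unfolding Amul_def C_def[symmetric] by (intro sum.cong refl) (simp add: \<nu>_def C_def)
    also have "\<dots> = measure Q (\<Union>c\<in>C. E c)"
    proof (rule measure_finite_Union[symmetric, OF finC])
      show "E ` C \<subseteq> sets Q" using Esets unfolding C_def by auto
      show "disjoint_family_on E C"
      proof (unfold disjoint_family_on_def, intro ballI impI)
        fix c c' assume cc: "c \<in> C" "c' \<in> C" "c \<noteq> c'"
        then obtain i where i: "c i \<noteq> c' i" using cc(3) by (meson ext)
        have "c i \<inter> c' i = {}"
          by (rule patches_disjoint[OF _ _ i]) (use cc cpat in \<open>auto simp: C_def\<close>)
        then show "E c \<inter> E c' = {}" unfolding E_def by auto
      qed
      show "emeasure Q (E c) \<noteq> \<infinity>" if "c \<in> C" for c by (simp add: Q.emeasure_eq_measure)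
    qed
    also have "\<dots> = measure Q {d \<in> space Q. d j \<in> x}"
    proof (rule measure_eq_AE)
      show "AE d in Q. d \<in> (\<Union>c\<in>C. E c) \<longleftrightarrow> d \<in> {d \<in> space Q. d j \<in> x}"
        using good
      proof eventually_elim
        case (elim d)
        show ?case
        proof
          assume "d \<in> (\<Union>c\<in>C. E c)"
          then show "d \<in> {d \<in> space Q. d j \<in> x}" unfolding C_def E_def by auto
        next
          assume dx: "d \<in> {d \<in> space Q. d j \<in> x}"
          let ?c = "\<lambda>i. patch_of p (d i)"
          have cc: "?c \<in> columns p rep" using colmem elim by blast
          have dU: "d i \<in> union_budgets p" for i
            using elim unfolding rationalizable_def union_budgets_def by blast
          have "?c j = x" using mem_patch_iff[OF xP dU[of j]] dx by auto
          then have "?c \<in> C" using cc unfolding C_def by auto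
          moreover have "d \<in> E ?c" using dx dU unfolding E_def patch_of_def by auto
          ultimately show "d \<in> (\<Union>c\<in>C. E c)" by blast
        qed
      qed
      show "(\<Union>c\<in>C. E c) \<in> sets Q" using Esets finC unfolding C_def by auto
      show "{d \<in> space Q. d j \<in> x} \<in> sets Q" by (rule Ssets[OF patches_borel[OF xP]])
    qed
    also have "\<dots> = measure (P j) x" using PQ[OF patches_borel[OF xP]] by simp
    finally show ?thesis .
  qed
  have feas: "\<nu> \<in> feasible p rep P jJ"
    unfolding feasible_def using Amul_eq by (auto simp: \<nu>_def)
  have objeq: "obj p rep jJ f \<nu> = (\<Sum>x\<in>patches_in p jJ. f x * measure (P jJ) x)" for f
    unfolding obj_def by (intro sum.cong refl) (simp add: Amul_eq)
  have IB: "(\<Sum>x\<in>patches_in p jJ. d_low k x * measure (P jJ) x) \<le> (\<integral>y. y$k \<partial>(P jJ))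
       \<and> (\<integral>y. y$k \<partial>(P jJ)) \<le> (\<Sum>x\<in>patches_in p jJ. d_up k x * measure (P jJ) x)"
    by (rule integral_bounds[OF pos sds(1) sds(2) sds(3)]) (use assms(4) in blast)
  have "delta_low p rep P jJ k \<le> ereal (obj p rep jJ (d_low k) \<nu>)"
    unfolding delta_low_def by (rule INF_lower[OF feas])
  also have "\<dots> \<le> ereal (\<integral>y. y$k \<partial>(P jJ))" using IB objeq by simp
  finally have 1: "delta_low p rep P jJ k \<le> ereal (\<integral>y. y$k \<partial>(P jJ))" .
  have "ereal (\<integral>y. y$k \<partial>(P jJ)) \<le> ereal (obj p rep jJ (d_up k) \<nu>)" using IB objeq by simp
  also have "\<dots> \<le> delta_up p rep P jJ k"
    unfolding delta_up_def by (rule SUP_upper[OF feas])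
  finally show ?thesis using 1 by simp
qed


end
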